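(* For each notion of guarding $\mathfrak{g}$, there is a natural isomorphism \[ \theta : H^{\mathfrak{g}} \circ \mathbb{G}^{\mathfrak{g}} \; \cong \; \mathbb{H} \circ H^{\mathfrak{g}} \] such that, for all $\sigma$-structures $\mathcal{A}$ (omitting $\mathfrak{g}$), $\varepsilon_{H\mathcal{A}}\circ\theta_{\mathcal{A}} = H\varepsilon_{\mathcal{A}}$ and $\delta_{H\mathcal{A}}\circ\theta_{\mathcal{A}} = \mathbb{H}\theta_{\mathcal{A}}\circ\theta_{\mathbb{G}\mathcal{A}}\circ H\delta_{\mathcal{A}}$. Thus $\theta$ forms an Eilenberg-Moore law.
   Context: $\mathfrak{g}$ is atom, loose or clique guarding. $H^{\mathfrak{g}}$ is the functor from $\sigma$-structures to hypergraphs sending $\mathcal{A}$ to $(A,E)$ with $E$ the set of $\mathfrak{g}$-guarded subsets of $\mathcal{A}$. $\mathbb{G}^{\mathfrak{g}}$ is the guarded comonad on $\sigma$-structures and $\mathbb{H}$ the hypergraph comonad; both are built from equivalence classes $[p,a]$ of focussed plays $\langle p,a\rangle$ ($p$ a non-empty list of guarded sets, resp. hyperedges, $a$ in the last element), where $\langle p,a\rangle\sim\langle q,a'\rangle$ iff $a=a'$, $p\sqcap q$ non-empty, and $a$ lies in the last element of every play on the prefix-order paths from $p\sqcap q$ to $p$ and $q$. In $\mathbb{G}\mathcal{A}$, $R^{\mathbb{G}\mathcal{A}}=\{([p,a_1],\ldots,[p,a_r])\mid R^{\mathcal{A}}(a_1,\ldots,a_r)\}$; in $\mathbb{H}(V,E)$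 the hyperedges are $\{[p,a]\mid a\in U\}$ with $U\in E$ the last element of $p$. In both, $\varepsilon([p,a])=a$ and $\delta([[U_1,\ldots,U_n],a])=[[T_1,\ldots,T_n],[[U_1,\ldots,U_n],a]]$ with $T_j=\{[[U_1,\ldots,U_j],b]\mid b\in U_j\}$. *)

theory Defs
  imports Main "HOL-Library.Sublist"
begin

text \<open>A signature sigma is given by a type 'r of relation symbols together with an
arity function ar.\<close>

record ('r, 'a) struc =
  carrier :: "'a set"
  rel :: "'r \<Rightarrow> 'a list set"

definition wf_struc :: "('r \<Rightarrow> nat) \<Rightarrow> ('r, 'a) struc \<Rightarrow> bool" where
  "wf_struc ar A \<longleftrightarrow>
     (\<forall>R. \<forall>t \<in> rel A R. length t = ar R \<and> set t \<subseteq> carrier A)"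

definition struc_hom :: "('r, 'a) struc \<Rightarrow> ('r, 'b) struc \<Rightarrow> ('a \<Rightarrow> 'b) \<Rightarrow> bool" where
  "struc_hom A B f \<longleftrightarrow>
     (\<forall>a \<in> carrier A. f a \<in> carrier B) \<and>
     (\<forall>R. \<forall>t \<in> rel A R. map f t \<in> rel B R)"

datatype guarding = Atom | Loose | Clique

definition gaifman_adj :: "('r, 'a) struc \<Rightarrow> 'a \<Rightarrow> 'a \<Rightarrow> bool" where
  "gaifman_adj A a b \<longleftrightarrow> a \<noteq> b \<and> (\<exists>R. \<exists>t \<in> rel A R. a \<in> set t \<and> b \<in> set t)"

definition guarded :: "guarding \<Rightarrow> ('r, 'a) struc \<Rightarrow> 'a set set" where
  "guarded g A =
    (case g of
      Atom \<Rightarrow> {{a} | a. a \<in> carrier A} \<union> {set t | t R. t \<in> rel A R}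
    | Loose \<Rightarrow> {{a} | a. a \<in> carrier A} \<union>
        {\<Union>((set \<circ> snd) ` F) | F :: ('r \<times> 'a list) set.
            finite F \<and> (\<forall>(R, t) \<in> F. t \<in> rel A R) \<and>
            (\<forall>a \<in> \<Union>((set \<circ> snd) ` F). \<forall>b \<in> \<Union>((set \<circ> snd) ` F).
               a \<noteq> b \<longrightarrow> (\<exists>(R, t) \<in> F. a \<in> set t \<and> b \<in> set t))}
    | Clique \<Rightarrow> {S. finite S \<and> S \<subseteq> carrier A \<and>
        (\<forall>a \<in> S. \<forall>b \<in> S. a \<noteq> b \<longrightarrow> gaifman_adj A a b)})"

type_synonym 'a hypergraph = "'a set \<times> 'a set set"

definition hyper_hom :: "'a hypergraph \<Rightarrow> 'b hypergraph \<Rightarrow> ('a \<Rightarrow> 'b) \<Rightarrow> bool" where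
  "hyper_hom H K f \<longleftrightarrow>
     (\<forall>v \<in> fst H. f v \<in> fst K) \<and> (\<forall>e \<in> snd H. f ` e \<in> snd K)"

definition hyper_iso :: "'a hypergraph \<Rightarrow> 'b hypergraph \<Rightarrow> ('a \<Rightarrow> 'b) \<Rightarrow> bool" where
  "hyper_iso H K f \<longleftrightarrow> hyper_hom H K f \<and>
     (\<exists>g. hyper_hom K H g \<and> (\<forall>v \<in> fst H. g (f v) = v) \<and> (\<forall>w \<in> fst K. f (g w) = w))"

text \<open>The functor H^g on objects (on morphisms it acts as the identity on functions).\<close>

definition Hg :: "guarding \<Rightarrow> ('r, 'a) struc \<Rightarrow> 'a hypergraph" where
  "Hg g A = (carrier A, guarded g A)"

text \<open>Generic construction over a set E of "guards" (guarded sets of a structure,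
resp. hyperedges of a hypergraph).\<close>

type_synonym 'a pelem = "('a set list \<times> 'a) set"

definition fplays :: "'a set set \<Rightarrow> ('a set list \<times> 'a) set" where
  "fplays E = {(p, a). p \<noteq> [] \<and> set p \<subseteq> E \<and> a \<in> last p}"

definition play_eq :: "('a set list \<times> 'a) \<Rightarrow> ('a set list \<times> 'a) \<Rightarrow> bool" where
  "play_eq x y \<longleftrightarrow>
     (case x of (p, a) \<Rightarrow> case y of (q, a') \<Rightarrow>
        a = a' \<and> longest_common_prefix p q \<noteq> [] \<and>
        (\<forall>r. prefix (longest_common_prefix p q) r \<and> prefix r p \<longrightarrow> a \<in> last r) \<and>
        (\<forall>r. prefix (longest_common_prefix p q) r \<and> prefix r q \<longrightarrow> a \<in> last r))"

definition cls :: "'a set set \<Rightarrow> ('a set list \<times> 'a) \<Rightarrow> 'a pelem" where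
  "cls E x = {y \<in> fplays E. play_eq y x}"

definition pcar :: "'a set set \<Rightarrow> 'a pelem set" where
  "pcar E = cls E ` fplays E"

definition tset :: "'a set set \<Rightarrow> 'a set list \<Rightarrow> 'a pelem set" where
  "tset E p = (\<lambda>b. cls E (p, b)) ` last p"

definition pmap :: "'a set set \<Rightarrow> 'b set set \<Rightarrow> ('a \<Rightarrow> 'b) \<Rightarrow> 'a pelem \<Rightarrow> 'b pelem" where
  "pmap E E' f x = {y. \<exists>(p, a) \<in> x. y \<in> cls E' (map ((`) f) p, f a)}"

definition peps :: "'a pelem \<Rightarrow> 'a" where
  "peps x = snd (SOME y. y \<in> x)"

text \<open>Comultiplication: delta [[U1,...,Un], a] = [[T1,...,Tn], [[U1,...,Un], a]]
with T_j = {[[U1,...,Uj], b] | b in U_j}. E are the guards of the object, E' those of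
the object one level up (in which the outer play lives).\<close>

definition lift_play :: "'a set set \<Rightarrow> 'a set list \<Rightarrow> 'a pelem set list" where
  "lift_play E p = map (\<lambda>j. tset E (take j p)) [1..<Suc (length p)]"

definition pdelta :: "'a set set \<Rightarrow> 'a pelem set set \<Rightarrow> 'a pelem \<Rightarrow> 'a pelem pelem" where
  "pdelta E E' x = {y. \<exists>(p, a) \<in> x. y \<in> cls E' (lift_play E p, x)}"

definition HH :: "'a hypergraph \<Rightarrow> 'a pelem hypergraph" where
  "HH H = (pcar (snd H), {tset (snd H) p | p. p \<noteq> [] \<and> set p \<subseteq> snd H})"

definition HH_map :: "'a hypergraph \<Rightarrow> 'b hypergraph \<Rightarrow> ('a \<Rightarrow> 'b) \<Rightarrow> 'a pelem \<Rightarrow> 'b pelem" where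
  "HH_map H K f = pmap (snd H) (snd K) f"

definition HH_eps :: "'a hypergraph \<Rightarrow> 'a pelem \<Rightarrow> 'a" where
  "HH_eps H = peps"

definition HH_delta :: "'a hypergraph \<Rightarrow> 'a pelem \<Rightarrow> 'a pelem pelem" where
  "HH_delta H = pdelta (snd H) (snd (HH H))"

definition GG :: "guarding \<Rightarrow> ('r, 'a) struc \<Rightarrow> ('r, 'a pelem) struc" where
  "GG g A =
    \<lparr> carrier = pcar (guarded g A),
      rel = (\<lambda>R. {map (\<lambda>b. cls (guarded g A) (p, b)) t | p t.
                    p \<noteq> [] \<and> set p \<subseteq> guarded g A \<and> t \<in> rel A R \<and> set t \<subseteq> last p}) \<rparr>"

definition GG_map :: "guarding \<Rightarrow> ('r, 'a) struc \<Rightarrow> ('r, 'b) struc \<Rightarrow> ('a \<Rightarrow> 'b)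
    \<Rightarrow> 'a pelem \<Rightarrow> 'b pelem" where
  "GG_map g A B f = pmap (guarded g A) (guarded g B) f"

definition GG_eps :: "guarding \<Rightarrow> ('r, 'a) struc \<Rightarrow> 'a pelem \<Rightarrow> 'a" where
  "GG_eps g A = peps"

definition GG_delta :: "guarding \<Rightarrow> ('r, 'a) struc \<Rightarrow> 'a pelem \<Rightarrow> 'a pelem pelem" where
  "GG_delta g A = pdelta (guarded g A) (guarded g (GG g A))"

text \<open>In this encoding, the vertex set of H^g(G A) and of H(H^g A) are literally the
same set of classes [p, a] (plays of guarded sets of A), and theta_A is the identity on
them.\<close>

definition theta :: "guarding \<Rightarrow> ('r, 'a) struc \<Rightarrow> 'a pelem \<Rightarrow> 'a pelem" where
  "theta g A = (\<lambda>x. x)"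

end

theory Submission
  imports Defs
begin

definition conn :: "'a \<Rightarrow> 'a set list \<Rightarrow> 'a set list \<Rightarrow> bool" where
  "conn a m p \<longleftrightarrow> prefix m p \<and> (\<forall>r. prefix m r \<and> prefix r p \<longrightarrow> a \<in> last r)"

lemma play_eq_conn:
  "play_eq (p,a) (q,b) \<longleftrightarrow> a = b \<and> (\<exists>m. m \<noteq> [] \<and> conn a m p \<and> conn a m q)"
proof
  assume h: "play_eq (p,a) (q,b)"
  let ?m = "longest_common_prefix p q"
  have "prefix ?m p" "prefix ?m q" by (simp_all add: longest_common_prefix_prefix1 longest_common_prefix_prefix2)
  with h show "a = b \<and> (\<exists>m. m \<noteq> [] \<and> conn a m p \<and> conn a m q)"
    unfolding play_eq_def conn_def by auto
next
  assume "a = b \<and> (\<exists>m. m \<noteq> [] \<and> conn a m p \<and> conn a m q)"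
  then obtain m where ab: "a = b" and m: "m \<noteq> []" "conn a m p" "conn a m q" by blast
  let ?l = "longest_common_prefix p q"
  have ml: "prefix m ?l" using m unfolding conn_def by (simp add: longest_common_prefix_max_prefix)
  have "?l \<noteq> []" using ml m(1) by auto
  moreover have "\<forall>r. prefix ?l r \<and> prefix r p \<longrightarrow> a \<in> last r"
    using m(2) ml unfolding conn_def by (meson prefix_order.trans)
  moreover have "\<forall>r. prefix ?l r \<and> prefix r q \<longrightarrow> a \<in> last r"
    using m(3) ml unfolding conn_def by (meson prefix_order.trans)
  ultimately show "play_eq (p,a) (q,b)" unfolding play_eq_def using ab by simp
qed

lemma conn_refl: "a \<in> last m \<Longrightarrow> conn a m m"
  unfolding conn_def using prefix_order.antisym by blast

lemma conn_sub: "conn a m q \<Longrightarrow> prefix m m' \<Longrightarrow> prefix m' q \<Longrightarrow> conn a m m'"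
  unfolding conn_def by (meson prefix_order.trans)

lemma conn_trans: "conn a m1 m2 \<Longrightarrow> conn a m2 s \<Longrightarrow> conn a m1 s"
  unfolding conn_def by (metis prefix_order.trans prefix_same_cases)

lemma conn_last: "conn a m p \<Longrightarrow> a \<in> last m"
  unfolding conn_def by blast

lemma conn_last2: "conn a m p \<Longrightarrow> a \<in> last p"
  unfolding conn_def by blast

lemma play_eq_sym: "play_eq x y \<Longrightarrow> play_eq y x"
  by (cases x; cases y) (auto simp: play_eq_conn)

lemma play_eq_trans: assumes "play_eq x y" "play_eq y z" shows "play_eq x z"
proof -
  obtain p a q b s c where xyz: "x = (p,a)" "y = (q,b)" "z = (s,c)" by (metis prod.exhaust)
  from assms obtain m1 m2 where h: "a = b" "b = c" "m1 \<noteq> []" "conn a m1 p" "conn a m1 q"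
     "m2 \<noteq> []" "conn a m2 q" "conn a m2 s"
    unfolding xyz play_eq_conn by blast
  have "prefix m1 m2 \<or> prefix m2 m1" using h conn_def prefix_same_cases by metis
  then show ?thesis
  proof
    assume "prefix m1 m2"
    then have "conn a m1 m2" using conn_sub h conn_def by metis
    then have "conn a m1 s" using conn_trans h by metis
    then show ?thesis unfolding xyz play_eq_conn using h by blast
  next
    assume "prefix m2 m1"
    then have "conn a m2 m1" using conn_sub h conn_def by metis
    then have "conn a m2 p" using conn_trans h by metis
    then show ?thesis unfolding xyz play_eq_conn using h by blast
  qed
qed

lemma play_eq_refl: "x \<in> fplays E \<Longrightarrow> play_eq x x"
  by (cases x) (auto simp: play_eq_conn fplays_def intro: conn_refl)

lemma cls_mem: "x \<in> fplays E \<Longrightarrow> x \<in> cls E x"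
  unfolding cls_def using play_eq_refl by blast

lemma cls_eq: "y \<in> cls E z \<Longrightarrow> cls E y = cls E z"
  unfolding cls_def using play_eq_sym play_eq_trans by blast

lemma cls_snd: "y \<in> cls E z \<Longrightarrow> snd y = snd z"
  unfolding cls_def play_eq_def by (auto split: prod.splits)

lemma peps_cls: "z \<in> fplays E \<Longrightarrow> peps (cls E z) = snd z"
  unfolding peps_def by (metis cls_mem cls_snd someI)

lemma cls_sub: "cls E z \<subseteq> fplays E"
  unfolding cls_def by blast

lemma cls_ext: assumes "(p,a) \<in> fplays E" "U \<in> E" "a \<in> U"
  shows "cls E (p @ [U], a) = cls E (p,a)"
proof -
  have p: "p \<noteq> []" "set p \<subseteq> E" "a \<in> last p" using assms(1) by (auto simp: fplays_def)
  have "(p @ [U], a) \<in> fplays E" using p assms by (auto simp: fplays_def)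
  moreover have "conn a p (p @ [U])" unfolding conn_def using p assms prefix_order.antisym by fastforce
  moreover have "conn a p p" using p by (simp add: conn_refl)
  ultimately have "(p @ [U], a) \<in> cls E (p,a)" unfolding cls_def using p play_eq_conn[of "p @ [U]" a p a] by blast
  then show ?thesis by (rule cls_eq)
qed

lemma pmap_id_union: "pmap E0 E' id (\<Union>w\<in>W. cls E' w) = (\<Union>w\<in>W. cls E' w)"
proof -
  have "pmap E0 E' id X = (\<Union>z\<in>X. cls E' z)" for X
    unfolding pmap_def by auto
  moreover have "(\<Union>z\<in>(\<Union>w\<in>W. cls E' w). cls E' z) = (\<Union>w\<in>W. cls E' w)"
  proof
    show "(\<Union>z\<in>(\<Union>w\<in>W. cls E' w). cls E' z) \<subseteq> (\<Union>w\<in>W. cls E' w)"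
      using cls_eq by fastforce
    show "(\<Union>w\<in>W. cls E' w) \<subseteq> (\<Union>z\<in>(\<Union>w\<in>W. cls E' w). cls E' z)"
      using cls_mem cls_sub by fastforce
  qed
  ultimately show ?thesis by simp
qed

lemma pdelta_union: "pdelta E E' x = (\<Union>w\<in>{(lift_play E p, x) | p a. (p,a) \<in> x}. cls E' w)"
  unfolding pdelta_def by auto



definition root :: "'a set set \<Rightarrow> 'a pelem \<Rightarrow> 'a set list" where
  "root E x = arg_min length (\<lambda>q. (q, peps x) \<in> x)"

lemma pcar_self: "x \<in> pcar E \<Longrightarrow> \<exists>q b. (q,b) \<in> fplays E \<and> x = cls E (q,b)"
  unfolding pcar_def by auto

lemma cls_D: "y \<in> cls E z \<Longrightarrow> y \<in> fplays E \<and> play_eq y z"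
  unfolding cls_def by blast

lemma cls_I: "y \<in> fplays E \<Longrightarrow> play_eq y z \<Longrightarrow> y \<in> cls E z"
  unfolding cls_def by blast

lemma root_props:
  assumes "x \<in> pcar E"
  shows "(root E x, peps x) \<in> x" and "\<And>q. (q, peps x) \<in> x \<Longrightarrow> conn (peps x) (root E x) q"
proof -
  obtain p0 a0 where z: "(p0,a0) \<in> fplays E" "x = cls E (p0,a0)" using pcar_self[OF assms] by blast
  have pe: "peps x = a0" using z peps_cls by fastforce
  have in0: "(p0, peps x) \<in> x" using z(2) pe cls_mem[OF z(1)] by simp
  let ?P = "\<lambda>q. (q, peps x) \<in> x"
  have R1: "?P (root E x)" and R2: "\<And>y. ?P y \<Longrightarrow> length (root E x) \<le> length y"
    using arg_min_nat_lemma[of ?P p0 length, OF in0] unfolding root_def by blast+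
  show "(root E x, peps x) \<in> x" using R1 .
  fix q assume q: "(q, peps x) \<in> x"
  have e1: "play_eq (q, peps x) (p0,a0)" using cls_D q z(2) by metis
  have e2: "play_eq (root E x, peps x) (p0,a0)" using cls_D R1 z(2) by metis
  have "play_eq (q, peps x) (root E x, peps x)" using play_eq_trans[OF e1 play_eq_sym[OF e2]] .
  then obtain m where m: "m \<noteq> []" "conn (peps x) m q" "conn (peps x) m (root E x)"
    unfolding play_eq_conn by blast
  have rf: "(root E x, peps x) \<in> fplays E" using cls_D R1 z(2) by metis
  have pm: "prefix m (root E x)" using m(3) unfolding conn_def by blast
  have "set (root E x) \<subseteq> E" using rf unfolding fplays_def by simp
  then have "set m \<subseteq> E" using set_mono_prefix[OF pm] by blast
  then have mf: "(m, peps x) \<in> fplays E"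
    using m(1) conn_last[OF m(2)] unfolding fplays_def by simp
  have "play_eq (m, peps x) (root E x, peps x)"
    unfolding play_eq_conn using m conn_refl[OF conn_last[OF m(2)]] by blast
  then have "play_eq (m, peps x) (p0, a0)" using play_eq_trans e2 by blast
  then have "(m, peps x) \<in> x" using cls_I[OF mf] z(2) by simp
  then have "length (root E x) \<le> length m" using R2 by blast
  then have "prefix (root E x) m" using prefix_length_prefix[OF prefix_order.refl pm] by blast
  then have "m = root E x" using pm prefix_order.antisym by blast
  then show "conn (peps x) (root E x) q" using m by simp
qed

lemma helly:
  assumes fin: "finite S" and ne: "S \<noteq> {}" and sub: "S \<subseteq> pcar E"
    and pcp: "\<And>x y. x \<in> S \<Longrightarrow> y \<in> S \<Longrightarrow> \<exists>q b c. (q,b) \<in> fplays E \<and> (q,c) \<in> fplays E \<and> x = cls E (q,b) \<and> y = cls E (q,c)"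
  shows "\<exists>q. \<forall>x\<in>S. (q, peps x) \<in> fplays E \<and> x = cls E (q, peps x)"
proof -
  let ?f = "\<lambda>x. length (root E x)"
  have "Max (?f ` S) \<in> ?f ` S" using fin ne by simp
  then obtain xs where xs: "Max (?f ` S) = ?f xs" "xs \<in> S" by (rule imageE)
  have xsmax: "\<And>x. x \<in> S \<Longrightarrow> ?f x \<le> ?f xs" using xs fin by (metis Max_ge finite_imageI imageI)
  define \<rho> where "\<rho> = root E xs"
  have "\<forall>x\<in>S. (\<rho>, peps x) \<in> fplays E \<and> x = cls E (\<rho>, peps x)"
  proof
    fix x assume x: "x \<in> S"
    obtain q b c where qbc: "(q,b) \<in> fplays E" "(q,c) \<in> fplays E" "x = cls E (q,b)" "xs = cls E (q,c)"
      using pcp[OF x xs(2)] by blast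
    have pb: "peps x = b" using qbc peps_cls by fastforce
    have pc: "peps xs = c" using qbc peps_cls by fastforce
    have xp: "x \<in> pcar E" "xs \<in> pcar E" using x xs sub by auto
    have qb: "(q, b) \<in> x" using qbc(1,3) cls_mem by blast
    have qc: "(q, c) \<in> xs" using qbc(2,4) cls_mem by blast
    have c1: "conn b (root E x) q" using root_props(2)[OF xp(1), of q] pb qb by simp
    have c2: "conn c \<rho> q" using root_props(2)[OF xp(2), of q] pc qc unfolding \<rho>_def by simp
    have p1: "prefix (root E x) q" using c1 unfolding conn_def by blast
    have p2: "prefix \<rho> q" using c2 unfolding conn_def by blast
    have pr: "prefix (root E x) \<rho>"
      using prefix_length_prefix[OF p1 p2] xsmax[OF x] unfolding \<rho>_def by simp
    have c3: "conn b (root E x) \<rho>" using conn_sub[OF c1 pr p2] .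
    have rx: "(root E x, b) \<in> x" using root_props(1)[OF xp(1)] pb by simp
    have xeq: "x = cls E (root E x, b)" using cls_eq[of "(root E x, b)" E "(q,b)"] rx qbc by simp
    have rxf: "(root E x, b) \<in> fplays E" using rx qbc cls_sub by blast
    have rsf: "(\<rho>, c) \<in> fplays E" using root_props(1)[OF xp(2)] pc qbc cls_sub \<rho>_def by blast
    have rhof: "(\<rho>, b) \<in> fplays E" using rsf conn_last2[OF c3] unfolding fplays_def by auto
    have "play_eq (\<rho>, b) (root E x, b)"
      unfolding play_eq_conn using rxf c3 conn_refl[OF conn_last[OF c3]] unfolding fplays_def by blast
    then have "(\<rho>, b) \<in> x" using xeq rhof unfolding cls_def by blast
    then have "cls E (\<rho>, b) = x" using cls_eq[of "(\<rho>, b)" E "(root E x, b)"] xeq by simp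
    then have "x = cls E (\<rho>, b)" by simp
    then show "(\<rho>, peps x) \<in> fplays E \<and> x = cls E (\<rho>, peps x)" using pb rhof by simp
  qed
  then show ?thesis by blast
qed

lemma backw:
  assumes fin: "finite S" and sub: "S \<subseteq> pcar E"
    and pcp: "\<And>x y. x \<in> S \<Longrightarrow> y \<in> S \<Longrightarrow> \<exists>q b c. (q,b) \<in> fplays E \<and> (q,c) \<in> fplays E \<and> x = cls E (q,b) \<and> y = cls E (q,c)"
    and FE: "peps ` S \<in> E"
  shows "\<exists>p. p \<noteq> [] \<and> set p \<subseteq> E \<and> S = tset E p"
proof (cases "S = {}")
  case True
  then show ?thesis using FE by (intro exI[of _ "[{}]"]) (auto simp: tset_def)
next
  case False
  obtain q where q: "\<forall>x\<in>S. (q, peps x) \<in> fplays E \<and> x = cls E (q, peps x)"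
    using helly[OF fin False sub pcp] by blast
  obtain x0 where x0: "x0 \<in> S" using False by blast
  have qE: "q \<noteq> []" "set q \<subseteq> E" using q x0 unfolding fplays_def by auto
  let ?p = "q @ [peps ` S]"
  have "tset E ?p = (\<lambda>b. cls E (?p, b)) ` (peps ` S)" unfolding tset_def by simp
  also have "\<dots> = (\<lambda>x. cls E (?p, peps x)) ` S" by (simp add: image_image)
  also have "\<dots> = (\<lambda>x. x) ` S"
  proof (rule image_cong[OF refl])
    fix x assume "x \<in> S"
    then show "cls E (?p, peps x) = x" using cls_ext[of q "peps x" E "peps ` S"] q FE by auto
  qed
  finally show ?thesis using qE FE by (intro exI[of _ ?p]) auto
qed



lemma guarded_Atom: "guarded Atom A = {{a} | a. a \<in> carrier A} \<union> {set t | t R. t \<in> rel A R}"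
  by (simp add: guarded_def)

lemma guarded_Loose: "guarded Loose A = {{a} | a. a \<in> carrier A} \<union>
        {\<Union>((set \<circ> snd) ` F) | F :: ('r \<times> 'a list) set.
            finite F \<and> (\<forall>(R, t) \<in> F. t \<in> rel A R) \<and>
            (\<forall>a \<in> \<Union>((set \<circ> snd) ` F). \<forall>b \<in> \<Union>((set \<circ> snd) ` F).
               a \<noteq> b \<longrightarrow> (\<exists>(R, t) \<in> F. a \<in> set t \<and> b \<in> set t))}"
  by (simp add: guarded_def)

lemma guarded_Clique: "guarded Clique A = {S. finite S \<and> S \<subseteq> carrier A \<and>
        (\<forall>a \<in> S. \<forall>b \<in> S. a \<noteq> b \<longrightarrow> gaifman_adj A a b)}"
  by (simp add: guarded_def)

lemma carrier_GG: "carrier (GG g A) = pcar (guarded g A)"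
  by (simp add: GG_def)

lemma rel_GG: "t' \<in> rel (GG g A) R \<longleftrightarrow> (\<exists>p t. t' = map (\<lambda>b. cls (guarded g A) (p, b)) t \<and>
   p \<noteq> [] \<and> set p \<subseteq> guarded g A \<and> t \<in> rel A R \<and> set t \<subseteq> last p)"
  by (simp add: GG_def)

lemma guarded_sub:
  assumes wf: "wf_struc ar A" and U: "U \<in> guarded g A" shows "U \<subseteq> carrier A"
proof (cases g)
  case Atom then show ?thesis using U wf by (auto simp: guarded_Atom wf_struc_def)
next
  case Loose
  have "\<And>R t. t \<in> rel A R \<Longrightarrow> set t \<subseteq> carrier A" using wf by (auto simp: wf_struc_def)
  then show ?thesis using U unfolding Loose guarded_Loose by fastforce
next
  case Clique then show ?thesis using U by (auto simp: guarded_Clique)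
qed

lemma single_guarded: "a \<in> carrier A \<Longrightarrow> {a} \<in> guarded g A"
  by (cases g) (auto simp: guarded_def)

lemma tuple_guarded:
  assumes wf: "wf_struc ar A" and t: "t \<in> rel A R" shows "set t \<in> guarded g A"
proof (cases g)
  case Atom then show ?thesis using t by (auto simp: guarded_Atom)
next
  case Loose
  let ?F = "{(R, t)}"
  have "set t = \<Union>((set \<circ> snd) ` ?F)" by simp
  moreover have "finite ?F \<and> (\<forall>(R, t) \<in> ?F. t \<in> rel A R) \<and>
            (\<forall>a \<in> \<Union>((set \<circ> snd) ` ?F). \<forall>b \<in> \<Union>((set \<circ> snd) ` ?F).
               a \<noteq> b \<longrightarrow> (\<exists>(R, t) \<in> ?F. a \<in> set t \<and> b \<in> set t))" using t by auto
  ultimately show ?thesis unfolding Loose guarded_Loose by blast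
next
  case Clique
  have "set t \<subseteq> carrier A" using wf t by (auto simp: wf_struc_def)
  moreover have "\<forall>a \<in> set t. \<forall>b \<in> set t. a \<noteq> b \<longrightarrow> gaifman_adj A a b"
    using t unfolding gaifman_adj_def by blast
  ultimately show ?thesis unfolding Clique guarded_Clique by auto
qed

lemma tuple_peps:
  assumes "p \<noteq> []" "set p \<subseteq> E" "set t \<subseteq> last p"
  shows "map peps (map (\<lambda>b. cls E (p,b)) t) = t"
proof -
  have "\<And>b. b \<in> set t \<Longrightarrow> peps (cls E (p,b)) = b"
    using assms peps_cls[of "(p,_)" E] unfolding fplays_def by auto
  then show ?thesis by (induction t) auto
qed

lemma tuple_elem:
  assumes "p \<noteq> []" "set p \<subseteq> E" "set t \<subseteq> last p" "x \<in> set (map (\<lambda>b. cls E (p,b)) t)"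
  shows "\<exists>b\<in>set t. (p,b) \<in> fplays E \<and> x = cls E (p,b) \<and> peps x = b"
proof -
  obtain b where b: "b \<in> set t" "x = cls E (p,b)" using assms(4) by auto
  have f: "(p,b) \<in> fplays E" using assms b unfolding fplays_def by auto
  then show ?thesis using b peps_cls[OF f] by auto
qed

lemma pcar_peps:
  assumes wf: "wf_struc ar A" and x: "x \<in> pcar (guarded g A)" shows "peps x \<in> carrier A"
proof -
  obtain q b where qb: "(q,b) \<in> fplays (guarded g A)" "x = cls (guarded g A) (q,b)"
    using pcar_self[OF x] by blast
  have "peps x = b" using qb peps_cls by fastforce
  moreover have "b \<in> last q" "last q \<in> guarded g A" using qb(1) unfolding fplays_def by auto
  ultimately show ?thesis using guarded_sub[OF wf] by blast
qed

lemma pcp_self: "x \<in> pcar E \<Longrightarrow> \<exists>q b c. (q,b) \<in> fplays E \<and> (q,c) \<in> fplays E \<and> x = cls E (q,b) \<and> x = cls E (q,c)"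
  using pcar_self by blast

lemma cls_pcar: "z \<in> fplays E \<Longrightarrow> cls E z \<in> pcar E"
  unfolding pcar_def by blast

lemma singleton_edge:
  assumes wf: "wf_struc ar A" and x: "x \<in> pcar (guarded g A)"
  shows "\<exists>p. p \<noteq> [] \<and> set p \<subseteq> guarded g A \<and> {x} = tset (guarded g A) p"
proof (rule backw)
  show "peps ` {x} \<in> guarded g A" using single_guarded pcar_peps[OF wf x] by simp
qed (use x pcp_self in auto)

lemma tuple_edge:
  assumes wf: "wf_struc ar A" and t': "t' \<in> rel (GG g A) R"
  shows "\<exists>p. p \<noteq> [] \<and> set p \<subseteq> guarded g A \<and> set t' = tset (guarded g A) p"
proof -
  let ?E = "guarded g A"
  obtain p t where pt: "t' = map (\<lambda>b. cls ?E (p, b)) t" "p \<noteq> []" "set p \<subseteq> ?E" "t \<in> rel A R" "set t \<subseteq> last p"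
    using t' unfolding rel_GG by blast
  show ?thesis
  proof (rule backw)
    show "finite (set t')" by simp
    show "set t' \<subseteq> pcar ?E" using tuple_elem[OF pt(2,3,5)] pt(1) cls_pcar by blast
    show "\<exists>q b c. (q,b) \<in> fplays ?E \<and> (q,c) \<in> fplays ?E \<and> x = cls ?E (q,b) \<and> y = cls ?E (q,c)"
      if "x \<in> set t'" "y \<in> set t'" for x y
      using tuple_elem[OF pt(2,3,5)] pt(1) that by metis
    have "peps ` set t' = set t" using tuple_peps[OF pt(2,3,5)] pt(1) by (metis set_map)
    then show "peps ` set t' \<in> ?E" using tuple_guarded[OF wf pt(4)] by simp
  qed
qed



abbreviation HE :: "('r, 'a) struc \<Rightarrow> guarding \<Rightarrow> 'a pelem set set" where
  "HE A g \<equiv> {tset (guarded g A) p | p. p \<noteq> [] \<and> set p \<subseteq> guarded g A}"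

lemma sub_Atom:
  assumes wf: "wf_struc ar A" and S: "S \<in> guarded Atom (GG Atom A)"
  shows "S \<in> HE A Atom"
proof -
  from S consider (s) x where "S = {x}" "x \<in> pcar (guarded Atom A)"
    | (t) t' R where "S = set t'" "t' \<in> rel (GG Atom A) R"
    unfolding guarded_Atom carrier_GG by blast
  then show ?thesis
  proof cases
    case s then show ?thesis using singleton_edge[OF wf s(2)] by auto
  next
    case t then show ?thesis using tuple_edge[OF wf t(2)] by auto
  qed
qed

lemma sub_Loose:
  fixes A :: "('r, 'a) struc"
  assumes wf: "wf_struc ar A" and S: "S \<in> guarded Loose (GG Loose A)"
  shows "S \<in> HE A Loose"
proof -
  let ?E = "guarded Loose A"
  consider (s) x where "S = {x}" "x \<in> pcar ?E"
    | (t) F where "S = \<Union>((set \<circ> snd) ` F)" "finite F" "\<forall>(R, t) \<in> F. t \<in> rel (GG Loose A) R"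
       "\<forall>a \<in> \<Union>((set \<circ> snd) ` F). \<forall>b \<in> \<Union>((set \<circ> snd) ` F).
               a \<noteq> b \<longrightarrow> (\<exists>(R, t) \<in> F. a \<in> set t \<and> b \<in> set t)"
  proof -
    have "S \<in> {{a} | a. a \<in> carrier (GG Loose A)} \<union>
        {\<Union>((set \<circ> snd) ` F) | F :: ('r \<times> 'a pelem list) set.
            finite F \<and> (\<forall>(R, t) \<in> F. t \<in> rel (GG Loose A) R) \<and>
            (\<forall>a \<in> \<Union>((set \<circ> snd) ` F). \<forall>b \<in> \<Union>((set \<circ> snd) ` F).
               a \<noteq> b \<longrightarrow> (\<exists>(R, t) \<in> F. a \<in> set t \<and> b \<in> set t))}"
      using S unfolding guarded_Loose[of "GG Loose A"] .
    then show ?thesis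
    proof (rule UnE)
      assume "S \<in> {{a} | a. a \<in> carrier (GG Loose A)}"
      then obtain x where "S = {x}" "x \<in> pcar ?E" unfolding carrier_GG by blast
      then show ?thesis using that(1) by blast
    next
      assume "S \<in> {\<Union>((set \<circ> snd) ` F) | F :: ('r \<times> 'a pelem list) set.
            finite F \<and> (\<forall>(R, t) \<in> F. t \<in> rel (GG Loose A) R) \<and>
            (\<forall>a \<in> \<Union>((set \<circ> snd) ` F). \<forall>b \<in> \<Union>((set \<circ> snd) ` F).
               a \<noteq> b \<longrightarrow> (\<exists>(R, t) \<in> F. a \<in> set t \<and> b \<in> set t))}"
      then obtain F :: "('r \<times> 'a pelem list) set" where "S = \<Union>((set \<circ> snd) ` F)" "finite F \<and> (\<forall>(R, t) \<in> F. t \<in> rel (GG Loose A) R) \<and>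
            (\<forall>a \<in> \<Union>((set \<circ> snd) ` F). \<forall>b \<in> \<Union>((set \<circ> snd) ` F).
               a \<noteq> b \<longrightarrow> (\<exists>(R, t) \<in> F. a \<in> set t \<and> b \<in> set t))"
        by (rule CollectE) blast
      then show ?thesis using that(2) by blast
    qed
  qed
  then show ?thesis
  proof cases
    case s
    obtain p where "p \<noteq> []" "set p \<subseteq> ?E" "{x} = tset ?E p" using singleton_edge[OF wf s(2)] by blast
    then show ?thesis using s(1) by blast
  next
    case t
    have tup: "\<exists>p t0. t = map (\<lambda>b. cls ?E (p, b)) t0 \<and> p \<noteq> [] \<and> set p \<subseteq> ?E \<and> t0 \<in> rel A R \<and> set t0 \<subseteq> last p"
      if "(R, t) \<in> F" for R t
    proof -
      have "t \<in> rel (GG Loose A) R" using t(3) that by auto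
      then show ?thesis unfolding rel_GG .
    qed
    have elem: "\<exists>p b. (p,b) \<in> fplays ?E \<and> x = cls ?E (p,b) \<and> peps x = b \<and> (\<forall>y \<in> set t. \<exists>c. (p,c) \<in> fplays ?E \<and> y = cls ?E (p,c))"
      if RtF: "(R, t) \<in> F" and xt: "x \<in> set t" for R t x
    proof -
      obtain p t0 where pt: "t = map (\<lambda>b. cls ?E (p, b)) t0" "p \<noteq> []" "set p \<subseteq> ?E" "set t0 \<subseteq> last p"
        using tup[OF RtF] by blast
      show ?thesis using tuple_elem[OF pt(2,3,4)] pt(1) xt by metis
    qed
    have "\<exists>p. p \<noteq> [] \<and> set p \<subseteq> ?E \<and> S = tset ?E p"
    proof (rule backw)
      show "finite S" using t(1,2) by simp
      show "S \<subseteq> pcar ?E"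
      proof
        fix x assume "x \<in> S"
        then obtain R t where Rt: "(R,t) \<in> F" "x \<in> set t" using t(1) by auto
        obtain p b where "(p,b) \<in> fplays ?E" "x = cls ?E (p,b)" using elem[OF Rt] by blast
        then show "x \<in> pcar ?E" using cls_pcar by blast
      qed
      show "\<exists>q b c. (q,b) \<in> fplays ?E \<and> (q,c) \<in> fplays ?E \<and> x = cls ?E (q,b) \<and> y = cls ?E (q,c)"
        if xy: "x \<in> S" "y \<in> S" for x y
      proof (cases "x = y")
        case True
        obtain R t where Rt: "(R,t) \<in> F" "x \<in> set t" using xy t(1) by auto
        obtain p b where "(p,b) \<in> fplays ?E" "x = cls ?E (p,b)" using elem[OF Rt] by blast
        then show ?thesis using True by blast
      next
        case False
        have xy': "x \<in> \<Union>((set \<circ> snd) ` F)" "y \<in> \<Union>((set \<circ> snd) ` F)" using xy t(1) by simp_all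
        obtain R t where Rt: "(R,t) \<in> F" "x \<in> set t" "y \<in> set t" using t(4) xy' False by blast
        obtain p b where pb: "(p,b) \<in> fplays ?E" "x = cls ?E (p,b)"
          "\<forall>y \<in> set t. \<exists>c. (p,c) \<in> fplays ?E \<and> y = cls ?E (p,c)" using elem[OF Rt(1,2)] by blast
        obtain c where "(p,c) \<in> fplays ?E" "y = cls ?E (p,c)" using pb(3) Rt(3) by blast
        then show ?thesis using pb by blast
      qed
      let ?F2 = "(\<lambda>(R, t). (R, map peps t)) ` F"
      have u: "peps ` S = \<Union>((set \<circ> snd) ` ?F2)" unfolding t(1) image_UN image_image by (simp add: case_prod_beta comp_def)
      have "finite ?F2" using t(2) by simp
      moreover have "\<forall>(R, t) \<in> ?F2. t \<in> rel A R"
      proof safe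
        fix R t assume "(R,t) \<in> F"
        then obtain p t0 where pt: "t = map (\<lambda>b. cls ?E (p, b)) t0" "p \<noteq> []" "set p \<subseteq> ?E" "t0 \<in> rel A R" "set t0 \<subseteq> last p"
          using tup by blast
        show "map peps t \<in> rel A R" using tuple_peps[OF pt(2,3,5)] pt(1,4) by simp
      qed
      moreover have "\<forall>a \<in> \<Union>((set \<circ> snd) ` ?F2). \<forall>b \<in> \<Union>((set \<circ> snd) ` ?F2).
               a \<noteq> b \<longrightarrow> (\<exists>(R, t) \<in> ?F2. a \<in> set t \<and> b \<in> set t)"
      proof (intro ballI impI)
        fix a b assume ab: "a \<in> \<Union>((set \<circ> snd) ` ?F2)" "b \<in> \<Union>((set \<circ> snd) ` ?F2)" "a \<noteq> b"
        have "a \<in> peps ` S" "b \<in> peps ` S" using ab(1,2) u by simp_all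
        then obtain x y where xy: "x \<in> S" "y \<in> S" "a = peps x" "b = peps y" by blast
        then have "x \<noteq> y" using ab by auto
        have xy': "x \<in> \<Union>((set \<circ> snd) ` F)" "y \<in> \<Union>((set \<circ> snd) ` F)" using xy t(1) by simp_all
        obtain R t where Rt: "(R,t) \<in> F" "x \<in> set t" "y \<in> set t" using t(4) xy' \<open>x \<noteq> y\<close> by blast
        have "(R, map peps t) \<in> ?F2" using Rt(1) by force
        moreover have "a \<in> set (map peps t)" "b \<in> set (map peps t)" using Rt xy by simp_all
        ultimately show "\<exists>(R, t) \<in> ?F2. a \<in> set t \<and> b \<in> set t" by blast
      qed
      ultimately show "peps ` S \<in> ?E" unfolding u guarded_Loose by blast
    qed
    then show ?thesis by blast
  qed
qed



lemma adj_GG: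
  assumes "gaifman_adj (GG g A) x y"
  shows "\<exists>p R t. p \<noteq> [] \<and> set p \<subseteq> guarded g A \<and> t \<in> rel A R \<and> set t \<subseteq> last p \<and>
     (p, peps x) \<in> fplays (guarded g A) \<and> (p, peps y) \<in> fplays (guarded g A) \<and>
     x = cls (guarded g A) (p, peps x) \<and> y = cls (guarded g A) (p, peps y) \<and>
     peps x \<in> set t \<and> peps y \<in> set t"
proof -
  let ?E = "guarded g A"
  obtain R t' where t': "t' \<in> rel (GG g A) R" "x \<in> set t'" "y \<in> set t'"
    using assms unfolding gaifman_adj_def by blast
  obtain p t where pt: "t' = map (\<lambda>b. cls ?E (p, b)) t" "p \<noteq> []" "set p \<subseteq> ?E" "t \<in> rel A R" "set t \<subseteq> last p"
    using t'(1) unfolding rel_GG by blast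
  obtain b where b: "b \<in> set t" "(p,b) \<in> fplays ?E" "x = cls ?E (p,b)" "peps x = b"
    using tuple_elem[OF pt(2,3,5)] pt(1) t'(2) by blast
  obtain c where c: "c \<in> set t" "(p,c) \<in> fplays ?E" "y = cls ?E (p,c)" "peps y = c"
    using tuple_elem[OF pt(2,3,5)] pt(1) t'(3) by blast
  have hx: "x = cls ?E (p, peps x)" unfolding b(4) by (rule b(3))
  have hy: "y = cls ?E (p, peps y)" unfolding c(4) by (rule c(3))
  have hx2: "(p, peps x) \<in> fplays ?E" "peps x \<in> set t" unfolding b(4) by (rule b(2), rule b(1))
  have hy2: "(p, peps y) \<in> fplays ?E" "peps y \<in> set t" unfolding c(4) by (rule c(2), rule c(1))
  note pt' = pt(2-5)
  show ?thesis by (intro exI[of _ p] exI[of _ R] exI[of _ t] conjI; fact)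
qed

lemma sub_Clique:
  fixes A :: "('r, 'a) struc"
  assumes wf: "wf_struc ar A" and S: "S \<in> guarded Clique (GG Clique A)"
  shows "S \<in> HE A Clique"
proof -
  let ?E = "guarded Clique A"
  have S1: "finite S" "S \<subseteq> pcar ?E" and S2: "\<And>x y. x \<in> S \<Longrightarrow> y \<in> S \<Longrightarrow> x \<noteq> y \<Longrightarrow> gaifman_adj (GG Clique A) x y"
    using S unfolding guarded_Clique[of "GG Clique A"] carrier_GG by blast+
  have "\<exists>p. p \<noteq> [] \<and> set p \<subseteq> ?E \<and> S = tset ?E p"
  proof (rule backw[OF S1])
    show "\<exists>q b c. (q,b) \<in> fplays ?E \<and> (q,c) \<in> fplays ?E \<and> x = cls ?E (q,b) \<and> y = cls ?E (q,c)"
      if xy: "x \<in> S" "y \<in> S" for x y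
    proof (cases "x = y")
      case True then show ?thesis using pcp_self[of x ?E] xy S1(2) by blast
    next
      case False
      then show ?thesis using adj_GG[OF S2[OF xy False]] by blast
    qed
    have "finite (peps ` S)" using S1 by simp
    moreover have "peps ` S \<subseteq> carrier A" using pcar_peps[OF wf] S1(2) by blast
    moreover have "\<forall>a \<in> peps ` S. \<forall>b \<in> peps ` S. a \<noteq> b \<longrightarrow> gaifman_adj A a b"
    proof (intro ballI impI)
      fix a b assume ab: "a \<in> peps ` S" "b \<in> peps ` S" "a \<noteq> b"
      then obtain x y where xy: "x \<in> S" "y \<in> S" "a = peps x" "b = peps y" by blast
      then have "x \<noteq> y" using ab by auto
      then obtain p R t where "t \<in> rel A R" "peps x \<in> set t" "peps y \<in> set t"
        using adj_GG[OF S2[OF xy(1,2)]] by blast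
      then show "gaifman_adj A a b" unfolding gaifman_adj_def using xy ab(3) by blast
    qed
    ultimately show "peps ` S \<in> ?E" unfolding guarded_Clique by blast
  qed
  then show ?thesis by blast
qed

lemma tset_single:
  assumes "p \<noteq> []" "set p \<subseteq> E" "last p = {a}"
  shows "tset E p = {cls E (p,a)}" "cls E (p,a) \<in> pcar E"
  using assms cls_pcar[of "(p,a)" E] unfolding tset_def fplays_def by auto

lemma tset_tuple:
  assumes "p \<noteq> []" "set p \<subseteq> guarded g A" "last p = set t" "t \<in> rel A R"
  shows "tset (guarded g A) p = set (map (\<lambda>b. cls (guarded g A) (p,b)) t)"
    "map (\<lambda>b. cls (guarded g A) (p,b)) t \<in> rel (GG g A) R"
proof -
  show "tset (guarded g A) p = set (map (\<lambda>b. cls (guarded g A) (p,b)) t)"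
    unfolding tset_def using assms by simp
  show "map (\<lambda>b. cls (guarded g A) (p,b)) t \<in> rel (GG g A) R"
    unfolding rel_GG using assms by blast
qed

lemma sup_Atom:
  fixes A :: "('r, 'a) struc"
  assumes p: "p \<noteq> []" "set p \<subseteq> guarded Atom A"
  shows "tset (guarded Atom A) p \<in> guarded Atom (GG Atom A)"
proof -
  let ?E = "guarded Atom A"
  have "last p \<in> ?E" using p by auto
  then consider (s) a where "last p = {a}" | (t) t R where "last p = set t" "t \<in> rel A R"
    unfolding guarded_Atom by blast
  then show ?thesis
  proof cases
    case s
    then show ?thesis using tset_single[OF p s] unfolding guarded_Atom carrier_GG by blast
  next
    case t
    then show ?thesis using tset_tuple[OF p t] unfolding guarded_Atom[of "GG Atom A"] by blast
  qed
qed

lemma sup_Loose: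
  fixes A :: "('r, 'a) struc"
  assumes p: "p \<noteq> []" "set p \<subseteq> guarded Loose A"
  shows "tset (guarded Loose A) p \<in> guarded Loose (GG Loose A)"
proof -
  let ?E = "guarded Loose A"
  have "last p \<in> ?E" using p by auto
  then have "last p \<in> {{a} | a. a \<in> carrier A} \<or> last p \<in> {\<Union>((set \<circ> snd) ` F) | F :: ('r \<times> 'a list) set.
            finite F \<and> (\<forall>(R, t) \<in> F. t \<in> rel A R) \<and>
            (\<forall>a \<in> \<Union>((set \<circ> snd) ` F). \<forall>b \<in> \<Union>((set \<circ> snd) ` F).
               a \<noteq> b \<longrightarrow> (\<exists>(R, t) \<in> F. a \<in> set t \<and> b \<in> set t))}"
    unfolding guarded_Loose by blast
  then show ?thesis
  proof
    assume "last p \<in> {{a} | a. a \<in> carrier A}"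
    then obtain a where s: "last p = {a}" by blast
    then show ?thesis using tset_single[OF p s] unfolding guarded_Loose[of "GG Loose A"] carrier_GG by blast
  next
    assume "last p \<in> {\<Union>((set \<circ> snd) ` F) | F :: ('r \<times> 'a list) set.
            finite F \<and> (\<forall>(R, t) \<in> F. t \<in> rel A R) \<and>
            (\<forall>a \<in> \<Union>((set \<circ> snd) ` F). \<forall>b \<in> \<Union>((set \<circ> snd) ` F).
               a \<noteq> b \<longrightarrow> (\<exists>(R, t) \<in> F. a \<in> set t \<and> b \<in> set t))}"
    then obtain F :: "('r \<times> 'a list) set" where F: "last p = \<Union>((set \<circ> snd) ` F)" "finite F"
      "\<forall>(R, t) \<in> F. t \<in> rel A R"
      "\<forall>a \<in> \<Union>((set \<circ> snd) ` F). \<forall>b \<in> \<Union>((set \<circ> snd) ` F).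
               a \<noteq> b \<longrightarrow> (\<exists>(R, t) \<in> F. a \<in> set t \<and> b \<in> set t)"
      by (rule CollectE) blast
    let ?c = "\<lambda>b. cls ?E (p,b)"
    let ?F2 = "(\<lambda>(R, t). (R, map ?c t)) ` F"
    have u: "tset ?E p = \<Union>((set \<circ> snd) ` ?F2)"
      unfolding tset_def F(1) image_UN image_image by (simp add: case_prod_beta comp_def)
    have "finite ?F2" using F(2) by simp
    moreover have "\<forall>(R, t) \<in> ?F2. t \<in> rel (GG Loose A) R"
    proof safe
      fix R t assume Rt: "(R,t) \<in> F"
      have h1: "set t \<subseteq> last p" using Rt F(1) by auto
      have h2: "t \<in> rel A R" using Rt F(3) by auto
      note p' = p
      show "map ?c t \<in> rel (GG Loose A) R" unfolding rel_GG
        by (intro exI[of _ p] exI[of _ t] conjI; (rule refl | fact))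
    qed
    moreover have "\<forall>x \<in> \<Union>((set \<circ> snd) ` ?F2). \<forall>y \<in> \<Union>((set \<circ> snd) ` ?F2).
               x \<noteq> y \<longrightarrow> (\<exists>(R, t) \<in> ?F2. x \<in> set t \<and> y \<in> set t)"
    proof (intro ballI impI)
      fix x y assume xy: "x \<in> \<Union>((set \<circ> snd) ` ?F2)" "y \<in> \<Union>((set \<circ> snd) ` ?F2)" "x \<noteq> y"
      have "x \<in> ?c ` last p" "y \<in> ?c ` last p" using xy(1,2) u unfolding tset_def by simp_all
      then obtain a b where ab: "a \<in> last p" "b \<in> last p" "x = ?c a" "y = ?c b" by blast
      then have "a \<noteq> b" using xy(3) by blast
      moreover have "a \<in> \<Union>((set \<circ> snd) ` F)" "b \<in> \<Union>((set \<circ> snd) ` F)" using ab(1,2) F(1) by simp_all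
      ultimately obtain R t where Rt: "(R,t) \<in> F" "a \<in> set t" "b \<in> set t" using F(4) by blast
      have "(R, map ?c t) \<in> ?F2" using Rt(1) by force
      moreover have "x \<in> set (map ?c t)" "y \<in> set (map ?c t)" using Rt ab by simp_all
      ultimately show "\<exists>(R, t) \<in> ?F2. x \<in> set t \<and> y \<in> set t" by blast
    qed
    ultimately show ?thesis unfolding u guarded_Loose[of "GG Loose A"] by blast
  qed
qed

lemma sup_Clique:
  fixes A :: "('r, 'a) struc"
  assumes wf: "wf_struc ar A" and p: "p \<noteq> []" "set p \<subseteq> guarded Clique A"
  shows "tset (guarded Clique A) p \<in> guarded Clique (GG Clique A)"
proof -
  let ?E = "guarded Clique A"
  let ?c = "\<lambda>b. cls ?E (p,b)"
  have U: "last p \<in> ?E" using p by auto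
  then have Uf: "finite (last p)" "\<forall>a \<in> last p. \<forall>b \<in> last p. a \<noteq> b \<longrightarrow> gaifman_adj A a b"
    unfolding guarded_Clique by blast+
  have "finite (tset ?E p)" unfolding tset_def using Uf by simp
  moreover have "tset ?E p \<subseteq> pcar ?E"
  proof
    fix x assume "x \<in> tset ?E p"
    then obtain b where b: "b \<in> last p" "x = ?c b" unfolding tset_def by blast
    have "(p,b) \<in> fplays ?E" using p b(1) unfolding fplays_def by simp
    then show "x \<in> pcar ?E" using cls_pcar b(2) by blast
  qed
  moreover have "\<forall>x \<in> tset ?E p. \<forall>y \<in> tset ?E p. x \<noteq> y \<longrightarrow> gaifman_adj (GG Clique A) x y"
  proof (intro ballI impI)
    fix x y assume xy: "x \<in> tset ?E p" "y \<in> tset ?E p" "x \<noteq> y"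
    then obtain a b where ab: "a \<in> last p" "b \<in> last p" "x = ?c a" "y = ?c b" unfolding tset_def by blast
    then have "a \<noteq> b" using xy(3) by blast
    then obtain R t where Rt: "t \<in> rel A R" "a \<in> set t" "b \<in> set t"
      using Uf(2) ab(1,2) unfolding gaifman_adj_def by blast
    have tE: "set t \<in> ?E" using tuple_guarded[OF wf Rt(1)] .
    let ?p = "p @ [set t]"
    have fa: "(p,a) \<in> fplays ?E" "(p,b) \<in> fplays ?E" using p ab unfolding fplays_def by auto
    have ca: "cls ?E (?p, a) = x" using cls_ext[OF fa(1) tE Rt(2)] ab by simp
    have cb: "cls ?E (?p, b) = y" using cls_ext[OF fa(2) tE Rt(3)] ab by simp
    have h1: "?p \<noteq> []" by simp
    have h2: "set ?p \<subseteq> ?E" using p tE by simp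
    have h3: "set t \<subseteq> last ?p" by simp
    note h4 = Rt(1)
    have "map (\<lambda>b. cls ?E (?p,b)) t \<in> rel (GG Clique A) R"
      unfolding rel_GG by (intro exI[of _ ?p] exI[of _ t] conjI; (rule refl | fact))
    moreover have "cls ?E (?p, a) \<in> set (map (\<lambda>b. cls ?E (?p,b)) t)" using Rt(2) by simp
    moreover have "cls ?E (?p, b) \<in> set (map (\<lambda>b. cls ?E (?p,b)) t)" using Rt(3) by simp
    ultimately have "map (\<lambda>b. cls ?E (?p,b)) t \<in> rel (GG Clique A) R" "x \<in> set (map (\<lambda>b. cls ?E (?p,b)) t)" "y \<in> set (map (\<lambda>b. cls ?E (?p,b)) t)"
      unfolding ca cb by blast+
    then show "gaifman_adj (GG Clique A) x y" unfolding gaifman_adj_def using xy(3) by blast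
  qed
  ultimately show ?thesis unfolding guarded_Clique[of "GG Clique A"] carrier_GG by blast
qed



lemma edges_eq:
  fixes A :: "('r, 'a) struc"
  assumes wf: "wf_struc ar A"
  shows "guarded g (GG g A) = HE A g"
proof (rule equalityI)
  show "guarded g (GG g A) \<subseteq> HE A g"
  proof
    fix S assume S: "S \<in> guarded g (GG g A)"
    show "S \<in> HE A g"
    proof (cases g)
      case Atom then show ?thesis using sub_Atom[OF wf] S by simp
    next
      case Loose then show ?thesis using sub_Loose[OF wf] S by simp
    next
      case Clique then show ?thesis using sub_Clique[OF wf] S by simp
    qed
  qed
  show "HE A g \<subseteq> guarded g (GG g A)"
  proof
    fix S assume "S \<in> HE A g"
    then obtain p where p: "S = tset (guarded g A) p" "p \<noteq> []" "set p \<subseteq> guarded g A" by blast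
    show "S \<in> guarded g (GG g A)"
    proof (cases g)
      case Atom then show ?thesis using sup_Atom p by simp
    next
      case Loose then show ?thesis using sup_Loose p by simp
    next
      case Clique then show ?thesis using sup_Clique[OF wf] p by simp
    qed
  qed
qed

lemma pmap_lam_id: "pmap E0 E' (\<lambda>x. x) (pdelta E E' x) = pdelta E E' x"
proof -
  have "pmap E0 E' (\<lambda>x. x) = pmap E0 E' id" by (simp add: id_def)
  then show ?thesis unfolding pdelta_union by (simp only: pmap_id_union)
qed

theorem theorem6p3:
  fixes g :: guarding and ar :: "'r \<Rightarrow> nat"
  shows
    "(\<forall>A :: ('r, 'a) struc. wf_struc ar A \<longrightarrow>
        hyper_iso (Hg g (GG g A)) (HH (Hg g A)) (theta g A))
     \<and> (\<forall>(A :: ('r, 'a) struc) (B :: ('r, 'b) struc) f.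
          wf_struc ar A \<and> wf_struc ar B \<and> struc_hom A B f \<longrightarrow>
          (\<forall>x \<in> carrier (GG g A).
             theta g B (GG_map g A B f x) = HH_map (Hg g A) (Hg g B) f (theta g A x)))
     \<and> (\<forall>A :: ('r, 'a) struc. wf_struc ar A \<longrightarrow>
          (\<forall>x \<in> carrier (GG g A). HH_eps (Hg g A) (theta g A x) = GG_eps g A x))
     \<and> (\<forall>A :: ('r, 'a) struc. wf_struc ar A \<longrightarrow>
          (\<forall>x \<in> carrier (GG g A).
             HH_delta (Hg g A) (theta g A x) =
             HH_map (Hg g (GG g A)) (HH (Hg g A)) (theta g A)
               (theta g (GG g A) (GG_delta g A x))))"
proof (intro conjI allI impI ballI)
  fix A :: "('r, 'a) struc"
  assume wf: "wf_struc ar A"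
  have E: "guarded g (GG g A) = snd (HH (Hg g A))"
    using edges_eq[OF wf] unfolding HH_def Hg_def by simp
  have V: "carrier (GG g A) = fst (HH (Hg g A))"
    unfolding HH_def Hg_def carrier_GG by simp
  have hh: "hyper_hom (Hg g (GG g A)) (HH (Hg g A)) (\<lambda>x. x)"
    unfolding hyper_hom_def using E V unfolding Hg_def by simp
  have hh2: "hyper_hom (HH (Hg g A)) (Hg g (GG g A)) (\<lambda>x. x)"
    unfolding hyper_hom_def using E V unfolding Hg_def by simp
  show "hyper_iso (Hg g (GG g A)) (HH (Hg g A)) (theta g A)"
    unfolding hyper_iso_def theta_def using hh hh2 by blast
next
  fix A :: "('r, 'a) struc" and B :: "('r, 'b) struc" and f x
  show "theta g B (GG_map g A B f x) = HH_map (Hg g A) (Hg g B) f (theta g A x)"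
    unfolding theta_def GG_map_def HH_map_def Hg_def by simp
next
  fix A :: "('r, 'a) struc" and x
  show "HH_eps (Hg g A) (theta g A x) = GG_eps g A x"
    unfolding theta_def HH_eps_def GG_eps_def by simp
next
  fix A :: "('r, 'a) struc" and x
  assume wf: "wf_struc ar A"
  have E: "guarded g (GG g A) = snd (HH (Hg g A))"
    using edges_eq[OF wf] unfolding HH_def Hg_def by simp
  show "HH_delta (Hg g A) (theta g A x) =
             HH_map (Hg g (GG g A)) (HH (Hg g A)) (theta g A)
               (theta g (GG g A) (GG_delta g A x))"
    unfolding theta_def HH_delta_def HH_map_def GG_delta_def E
    unfolding Hg_def snd_conv pmap_lam_id by simp
qed


end
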